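(* There exist a homogeneous suborder $A \subseteq \mathbb{R}$ and a countable set $X \subseteq \mathbb{R}\setminus A$ such that $A \cup X$ is not order-isomorphic to $A$.
   Context: A suborder $X \subseteq \mathbb{R}$ is homogeneous if for every open interval $I=(a,b)$ with $-\infty\le a<b\le\infty$ we have $X \cong X\cap I$ (order-isomorphism). *)

theory Defs
  imports "HOL-Analysis.Analysis" "HOL-Library.Extended_Real"
begin

definition order_iso :: "real set \<Rightarrow> real set \<Rightarrow> bool" where
  "order_iso X Y \<longleftrightarrow> (\<exists>f. bij_betw f X Y \<and> (\<forall>x\<in>X. \<forall>y\<in>X. x < y \<longrightarrow> f x < f y))"

definition open_ival :: "ereal \<Rightarrow> ereal \<Rightarrow> real set" where
  "open_ival a b = {x. a < ereal x \<and> ereal x < b}"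

definition homogeneous :: "real set \<Rightarrow> bool" where
  "homogeneous X \<longleftrightarrow> (\<forall>a b. a < b \<longrightarrow> order_iso X (X \<inter> open_ival a b))"

end

theory Submission
  imports Defs
begin

lemma irr_between: assumes "(p::real) < q" shows "\<exists>z. p < z \<and> z < q \<and> z \<notin> \<rat>"
  using real_interval_avoid_countable_set[OF assms countable_rat] by auto

lemma not_iso_UNIV: "\<not> order_iso UNIV (- \<rat>)"
proof
  assume "order_iso UNIV (- \<rat>)"
  then obtain f :: "real \<Rightarrow> real" where bij: "bij_betw f UNIV (- \<rat>)" and mono: "\<And>x y. x < y \<Longrightarrow> f x < f y"
    unfolding order_iso_def by blast
  have le: "f x \<le> f y \<longleftrightarrow> x \<le> y" for x y
    using mono[of x y] mono[of y x] by (cases x y rule: linorder_cases) auto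
  have surj: "\<exists>t. f t = z" if "z \<notin> \<rat>" for z
  proof -
    have "z \<in> f ` UNIV" using bij that unfolding bij_betw_def by simp
    then show ?thesis by blast
  qed
  have irr: "f x \<notin> \<rat>" for x using bij unfolding bij_betw_def by auto
  obtain z0 :: real where "-1 < z0" "z0 < 0" "z0 \<notin> \<rat>" using irr_between[of "-1" 0] by auto
  then obtain x0 where x0: "f x0 < 0" using surj by force
  obtain z1 :: real where "0 < z1" "z1 < 1" "z1 \<notin> \<rat>" using irr_between[of 0 1] by auto
  then obtain x1 where x1: "f x1 > 0" using surj by force
  define S where "S = {x. f x < 0}"
  have ne: "S \<noteq> {}" using x0 S_def by auto
  have "x \<le> x1" if "x \<in> S" for x
  proof (rule ccontr)
    assume "\<not> x \<le> x1"
    then have "f x1 < f x" using mono by simp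
    then show False using that x1 S_def by auto
  qed
  then have bdd: "bdd_above S" unfolding bdd_above_def by blast
  define s where "s = Sup S"
  have "f s \<noteq> 0" using irr[of s] by auto
  then consider "f s < 0" | "f s > 0" by linarith
  then show False
  proof cases
    case 1
    then obtain z where "f s < z" "z < 0" "z \<notin> \<rat>" using irr_between by blast
    then obtain t where t: "f t = z" using surj by blast
    have "t \<in> S" using t \<open>z < 0\<close> S_def by auto
    then have "t \<le> s" unfolding s_def using cSup_upper bdd by blast
    then show False using le[of t s] t \<open>f s < z\<close> by auto
  next
    case 2
    then obtain z where "0 < z" "z < f s" "z \<notin> \<rat>" using irr_between by blast
    then obtain t where t: "f t = z" using surj by blast
    have "t < s" using le[of s t] t \<open>z < f s\<close> by auto
    then obtain x where "x \<in> S" "t < x" unfolding s_def using less_cSup_iff[OF ne bdd] by auto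
    then show False using mono[of t x] t \<open>0 < z\<close> S_def by auto
  qed
qed

lemma step_mono:
  fixes c :: "int \<Rightarrow> real"
  assumes st: "\<And>k. c k < c (k+1)"
  shows "k \<le> l \<Longrightarrow> c k \<le> c l"
proof -
  have "c k \<le> c (k + int n)" for n
  proof (induction n)
    case 0 then show ?case by simp
  next
    case (Suc n)
    have eq: "k + int (Suc n) = k + int n + 1" by simp
    have "c (k + int n) < c (k + int n + 1)" by (rule st)
    then show ?case unfolding eq using Suc by linarith
  qed
  moreover assume "k \<le> l"
  then have "l = k + int (nat (l - k))" by simp
  ultimately show "c k \<le> c l" by metis
qed

lemma bracket:
  fixes c :: "int \<Rightarrow> real"
  assumes st: "\<And>k. c k < c (k+1)"
  assumes "c k0 \<le> y" "y < c k1"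
  shows "\<exists>k. c k \<le> y \<and> y < c (k+1)"
proof -
  have "\<forall>k0. c k0 \<le> y \<longrightarrow> y < c (k0 + int n) \<longrightarrow> (\<exists>k. c k \<le> y \<and> y < c (k+1))" for n
  proof (induction n)
    case 0 then show ?case by auto
  next
    case (Suc n)
    show ?case
    proof (intro allI impI)
      fix k0 assume a: "c k0 \<le> y" "y < c (k0 + int (Suc n))"
      show "\<exists>k. c k \<le> y \<and> y < c (k+1)"
      proof (cases "y < c (k0+1)")
        case True then show ?thesis using a by blast
      next
        case False
        then have "c (k0+1) \<le> y" by simp
        moreover have "y < c (k0 + 1 + int n)" using a by (simp add: add_ac)
        ultimately show ?thesis using Suc by blast
      qed
    qed
  qed
  moreover have "k0 < k1"
  proof (rule ccontr)
    assume "\<not> k0 < k1" then have "k1 \<le> k0" by simp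
    then show False using assms step_mono[of c, OF st, of k1 k0] by linarith
  qed
  then have "k1 = k0 + int (nat (k1 - k0))" by simp
  ultimately show ?thesis using assms(2,3) by metis
qed

definition pw :: "(int \<Rightarrow> real) \<Rightarrow> real \<Rightarrow> real" where
  "pw c x = c \<lfloor>x\<rfloor> + (c (\<lfloor>x\<rfloor>+1) - c \<lfloor>x\<rfloor>) * (x - of_int \<lfloor>x\<rfloor>)"

lemma piecewise_iso:
  fixes c :: "int \<Rightarrow> real" and a b :: ereal
  assumes st: "\<And>k. c k < c (k+1)"
    and rat: "\<And>k. c k \<in> \<rat>"
    and inab: "\<And>k. a < ereal (c k) \<and> ereal (c k) < b"
    and cov: "\<And>y. a < ereal y \<Longrightarrow> ereal y < b \<Longrightarrow> (\<exists>k. c k \<le> y) \<and> (\<exists>k. y < c k)"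
  shows "order_iso (-\<rat>) ((-\<rat>) \<inter> open_ival a b)"
proof -
  define f where "f = pw c"
  have bnd: "c \<lfloor>x\<rfloor> \<le> f x \<and> f x < c (\<lfloor>x\<rfloor>+1)" for x
  proof -
    define d where "d = c (\<lfloor>x\<rfloor>+1) - c \<lfloor>x\<rfloor>"
    define t where "t = x - of_int \<lfloor>x\<rfloor>"
    have d: "d > 0" using st d_def by simp
    have t: "0 \<le> t" "t < 1" using t_def by linarith+
    have "0 \<le> d * t" using d t by simp
    moreover have "d * t < d" using d t mult_strict_left_mono[of t 1 d] by simp
    ultimately show ?thesis unfolding f_def pw_def d_def[symmetric] t_def[symmetric] using d_def by linarith
  qed
  have mono: "f x < f y" if "x < y" for x y
  proof (cases "\<lfloor>x\<rfloor> = \<lfloor>y\<rfloor>")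
    case True
    define d where "d = c (\<lfloor>x\<rfloor>+1) - c \<lfloor>x\<rfloor>"
    have d: "d > 0" using st d_def by simp
    have "d * (x - of_int \<lfloor>x\<rfloor>) < d * (y - of_int \<lfloor>x\<rfloor>)" using d that by simp
    then show ?thesis unfolding f_def pw_def using True d_def by simp
  next
    case False
    then have "\<lfloor>x\<rfloor> < \<lfloor>y\<rfloor>" using floor_mono[of x y] that by linarith
    then have "c (\<lfloor>x\<rfloor>+1) \<le> c \<lfloor>y\<rfloor>" using step_mono[of c, OF st] by simp
    then show ?thesis using bnd[of x] bnd[of y] by linarith
  qed
  have inv: "of_int \<lfloor>x\<rfloor> + (f x - c \<lfloor>x\<rfloor>) / (c (\<lfloor>x\<rfloor>+1) - c \<lfloor>x\<rfloor>) = x" for x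
  proof -
    define D where "D = c (\<lfloor>x\<rfloor>+1) - c \<lfloor>x\<rfloor>"
    have D: "D \<noteq> 0" using st[of "\<lfloor>x\<rfloor>"] D_def by simp
    have eq: "f x - c \<lfloor>x\<rfloor> = D * (x - of_int \<lfloor>x\<rfloor>)"
      unfolding f_def pw_def D_def by simp
    have "(f x - c \<lfloor>x\<rfloor>) / D = x - of_int \<lfloor>x\<rfloor>" unfolding eq using D by simp
    then show ?thesis unfolding D_def[symmetric] by linarith
  qed
  have irr: "f x \<notin> \<rat>" if "x \<notin> \<rat>" for x
  proof
    assume "f x \<in> \<rat>"
    then have "of_int \<lfloor>x\<rfloor> + (f x - c \<lfloor>x\<rfloor>) / (c (\<lfloor>x\<rfloor>+1) - c \<lfloor>x\<rfloor>) \<in> \<rat>"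
      using rat by (intro Rats_add Rats_divide Rats_diff) auto
    then have "x \<in> \<rat>" by (simp only: inv)
    then show False using that by simp
  qed
  have inI: "a < ereal (f x) \<and> ereal (f x) < b" for x
  proof -
    have "ereal (c \<lfloor>x\<rfloor>) \<le> ereal (f x)" "ereal (f x) < ereal (c (\<lfloor>x\<rfloor>+1))" using bnd[of x] by auto
    then show ?thesis using inab[of "\<lfloor>x\<rfloor>"] inab[of "\<lfloor>x\<rfloor>+1"] by (meson order_less_le_trans order_less_trans)
  qed
  have sur: "\<exists>x. x \<notin> \<rat> \<and> f x = y" if yA: "y \<notin> \<rat>" "a < ereal y" "ereal y < b" for y
  proof -
    obtain k0 k1 where "c k0 \<le> y" "y < c k1" using cov[OF yA(2) yA(3)] by blast
    then obtain k where k: "c k \<le> y" "y < c (k+1)" using bracket[of c, OF st] by blast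
    define d where "d = c (k+1) - c k"
    have d: "d > 0" using st d_def by simp
    define t where "t = (y - c k) / d"
    have t0: "0 \<le> t" unfolding t_def using k d by simp
    have t1: "t < 1" unfolding t_def using k d pos_divide_less_eq[OF d, of "y - c k" 1] unfolding d_def by simp
    note t = t0 t1
    define x where "x = of_int k + t"
    have fl: "\<lfloor>x\<rfloor> = k" unfolding x_def using t by (simp add: floor_eq_iff)
    have fx: "f x = y" unfolding f_def pw_def fl using d unfolding x_def t_def d_def by (simp add: field_simps)
    have "x \<notin> \<rat>"
    proof
      assume "x \<in> \<rat>"
      then have "c k + d * (x - of_int k) \<in> \<rat>" using rat unfolding d_def
        by (intro Rats_add Rats_mult Rats_diff) auto
      moreover have "c k + d * (x - of_int k) = y"
      proof -
        have "d \<noteq> 0" using d by simp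
        then have "d * ((y - c k) / d) = y - c k" by simp
        then show ?thesis unfolding x_def t_def by simp
      qed
      ultimately show False using yA by simp
    qed
    then show ?thesis using fx by blast
  qed
  have injf: "inj_on f (-\<rat>)"
  proof (rule inj_onI)
    fix x y assume "f x = f y"
    then show "x = y" using mono[of x y] mono[of y x] by (cases x y rule: linorder_cases) auto
  qed
  have "f ` (-\<rat>) = (-\<rat>) \<inter> open_ival a b"
  proof
    show "f ` (-\<rat>) \<subseteq> (-\<rat>) \<inter> open_ival a b" using irr inI unfolding open_ival_def by auto
    show "(-\<rat>) \<inter> open_ival a b \<subseteq> f ` (-\<rat>)"
    proof
      fix y assume "y \<in> (-\<rat>) \<inter> open_ival a b"
      then obtain x where "x \<notin> \<rat>" "f x = y" using sur unfolding open_ival_def by auto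
      then show "y \<in> f ` (-\<rat>)" by auto
    qed
  qed
  then have "bij_betw f (-\<rat>) ((-\<rat>) \<inter> open_ival a b)" using injf unfolding bij_betw_def by blast
  then show ?thesis unfolding order_iso_def
    by (intro exI[of _ f] conjI ballI impI) (auto intro: mono)
qed


lemma up_seq:
  fixes m :: real and b :: ereal
  assumes mQ: "m \<in> \<rat>" and mb: "ereal m < b"
  shows "\<exists>u::nat \<Rightarrow> real. u 0 = m \<and> (\<forall>n. u n < u (Suc n)) \<and> (\<forall>n. u n \<in> \<rat>) \<and>
           (\<forall>n. ereal (u n) < b) \<and> (\<forall>y. ereal y < b \<longrightarrow> (\<exists>n. y < u n))"
proof (cases b)
  case PInf
  define u where "u n = m + real n" for n
  have "u 0 = m" unfolding u_def by simp
  moreover have "\<forall>n. u n < u (Suc n)" unfolding u_def by simp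
  moreover have "\<forall>n. u n \<in> \<rat>" unfolding u_def using mQ by (simp add: Rats_add)
  moreover have "\<forall>n. ereal (u n) < b" using PInf by simp
  moreover have "\<forall>y. ereal y < b \<longrightarrow> (\<exists>n. y < u n)"
  proof (intro allI impI)
    fix y
    obtain n where "y - m < real n" using reals_Archimedean2 by blast
    then show "\<exists>n. y < u n" unfolding u_def by (intro exI[of _ n]) linarith
  qed
  ultimately show ?thesis by blast
next
  case MInf
  then show ?thesis using mb by simp
next
  case (real \<beta>)
  define d where "d = \<beta> - m"
  have d: "d > 0" using mb real d_def by simp
  have "\<forall>n::nat. \<exists>q. q \<in> \<rat> \<and> \<beta> - d / (real n + 1) < q \<and> q < \<beta> - d / (real n + 2)"
  proof
    fix n :: nat
    have "d / (real n + 2) < d / (real n + 1)" using d by (simp add: divide_strict_left_mono)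
    then have "\<beta> - d / (real n + 1) < \<beta> - d / (real n + 2)" by simp
    then show "\<exists>q. q \<in> \<rat> \<and> \<beta> - d / (real n + 1) < q \<and> q < \<beta> - d / (real n + 2)"
      using Rats_dense_in_real by blast
  qed
  then obtain g where g: "\<And>n. g n \<in> \<rat>" "\<And>n. \<beta> - d / (real n + 1) < g n"
    "\<And>n. g n < \<beta> - d / (real n + 2)" by metis
  define u where "u n = (case n of 0 \<Rightarrow> m | Suc k \<Rightarrow> g k)" for n
  have u0: "u 0 = m" unfolding u_def by simp
  have uS: "u (Suc n) = g n" for n unfolding u_def by simp
  have ule: "u n \<le> \<beta> - d / (real n + 1)" for n
  proof (cases n)
    case 0 then show ?thesis using u0 d_def by simp
  next
    case (Suc k)
    have "g k < \<beta> - d / (real k + 2)" by (rule g(3))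
    then show ?thesis using Suc uS by (simp add: add.commute)
  qed
  have "\<forall>n. u n < u (Suc n)"
  proof
    fix n show "u n < u (Suc n)" using ule[of n] g(2)[of n] uS[of n] by linarith
  qed
  moreover have "\<forall>n. u n \<in> \<rat>"
  proof
    fix n show "u n \<in> \<rat>" using mQ g(1) by (cases n) (auto simp: u0 uS)
  qed
  moreover have "\<forall>n. ereal (u n) < b"
  proof
    fix n
    have "0 < d / (real n + 1)" using d by simp
    then have "u n < \<beta>" using ule[of n] by linarith
    then show "ereal (u n) < b" using real by simp
  qed
  moreover have "\<forall>y. ereal y < b \<longrightarrow> (\<exists>n. y < u n)"
  proof (intro allI impI)
    fix y assume "ereal y < b"
    then have yb: "y < \<beta>" using real by simp
    obtain n where n: "d / (\<beta> - y) < real n" using reals_Archimedean2 by blast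
    have pos: "\<beta> - y > 0" using yb by simp
    have "d < real n * (\<beta> - y)" using n pos by (simp add: divide_less_eq)
    also have "\<dots> \<le> (real n + 1) * (\<beta> - y)" using pos by (simp add: mult_right_mono)
    finally have "d < (\<beta> - y) * (real n + 1)" by (simp add: mult.commute)
    then have "d / (real n + 1) < \<beta> - y" by (subst pos_divide_less_eq) auto
    then have "y < u (Suc n)" using g(2)[of n] uS[of n] by linarith
    then show "\<exists>n. y < u n" by blast
  qed
  ultimately show ?thesis using u0 by blast
qed


lemma irr_homogeneous: "homogeneous (-\<rat>)"
  unfolding homogeneous_def
proof (intro allI impI)
  fix a b :: ereal assume ab: "a < b"
  obtain z1 where z1: "a < ereal z1" "ereal z1 < b" using ereal_dense2[OF ab] by blast
  obtain z2 where z2: "ereal z1 < ereal z2" "ereal z2 < b" using ereal_dense2[OF z1(2)] by blast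
  obtain m where m: "m \<in> \<rat>" "z1 < m" "m < z2" using Rats_dense_in_real[of z1 z2] z2 by auto
  have am: "a < ereal m" using z1 m by (meson ereal_less(3) order_less_trans less_ereal.simps(1))
  have mb: "ereal m < b" using z2 m by (meson less_ereal.simps(1) order_less_trans)
  obtain u where u: "u 0 = m" "\<And>n. u n < u (Suc n)" "\<And>n. u n \<in> \<rat>" "\<And>n. ereal (u n) < b"
    "\<And>y. ereal y < b \<Longrightarrow> \<exists>n. y < u n"
    using up_seq[OF m(1) mb] by metis
  have mQ': "-m \<in> \<rat>" using m(1) by simp
  have ma: "ereal (-m) < -a" using am by (simp add: ereal_less_uminus_reorder)
  obtain v where v: "v 0 = -m" "\<And>n. v n < v (Suc n)" "\<And>n. v n \<in> \<rat>" "\<And>n. ereal (v n) < -a"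
    "\<And>y. ereal y < -a \<Longrightarrow> \<exists>n. y < v n"
    using up_seq[OF mQ' ma] by metis
  define c where "c k = (if 0 \<le> k then u (nat k) else - v (nat (-k)))" for k :: int
  have cpos: "c (int n) = u n" for n unfolding c_def by simp
  have cneg: "c (- int n) = - v n" for n
    unfolding c_def using u(1) v(1) by (cases "n = 0") auto
  have umono: "m \<le> u n" for n
  proof -
    have "u 0 \<le> u n" by (rule lift_Suc_mono_le[of u]) (auto intro: less_imp_le u(2))
    then show ?thesis using u(1) by simp
  qed
  have vmono: "-m \<le> v n" for n
  proof -
    have "v 0 \<le> v n" by (rule lift_Suc_mono_le[of v]) (auto intro: less_imp_le v(2))
    then show ?thesis using v(1) by simp
  qed
  have ccases: "P (c k)" if "\<And>n. P (u n)" "\<And>n. P (- v n)" for P k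
  proof (cases "0 \<le> k")
    case True then show ?thesis unfolding c_def using that by simp
  next
    case False then show ?thesis unfolding c_def using that by simp
  qed
  have st: "c k < c (k+1)" for k
  proof (cases k rule: int_cases)
    case (nonneg n)
    have "k + 1 = int (Suc n)" using nonneg by simp
    then have "c (k+1) = u (Suc n)" using cpos by metis
    then show ?thesis using nonneg cpos u(2)[of n] by simp
  next
    case (neg n)
    have "k = - int (Suc n)" using neg by simp
    moreover have "k + 1 = - int n" using neg by simp
    ultimately have "c k = - v (Suc n)" "c (k+1) = - v n" using cneg by metis+
    then show ?thesis using v(2)[of n] by simp
  qed
  have rat: "c k \<in> \<rat>" for k
    by (rule ccases[where P="\<lambda>x. x \<in> \<rat>"]) (use u(3) v(3) in auto)
  have inab: "a < ereal (c k) \<and> ereal (c k) < b" for k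
  proof (rule ccases[where P="\<lambda>x. a < ereal x \<and> ereal x < b"])
    fix n
    have "ereal m \<le> ereal (u n)" using umono by simp
    then show "a < ereal (u n) \<and> ereal (u n) < b" using am u(4)[of n] by (meson order_less_le_trans)
  next
    fix n
    have "a < ereal (- v n)" using v(4)[of n] by (simp add: ereal_less_uminus_reorder)
    moreover have "ereal (- v n) \<le> ereal m" using vmono[of n] by simp
    ultimately show "a < ereal (- v n) \<and> ereal (- v n) < b" using mb by (meson order_le_less_trans)
  qed
  have cov: "(\<exists>k. c k \<le> y) \<and> (\<exists>k. y < c k)" if yab: "a < ereal y" "ereal y < b" for y
  proof
    have "ereal (-y) < -a" using yab(1) by (simp add: ereal_less_uminus_reorder)
    then obtain n where "-y < v n" using v(5) by blast
    then have "c (- int n) \<le> y" using cneg by simp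
    then show "\<exists>k. c k \<le> y" by blast
  next
    obtain n where "y < u n" using u(5) yab(2) by blast
    then show "\<exists>k. y < c k" using cpos by metis
  qed
  show "order_iso (-\<rat>) ((-\<rat>) \<inter> open_ival a b)"
    by (rule piecewise_iso[OF st rat inab cov])
qed

theorem corollary3:
  shows "\<exists>A X :: real set. A \<noteq> {} \<and> homogeneous A \<and> countable X \<and> X \<inter> A = {} \<and>
           \<not> order_iso (A \<union> X) A"
proof -
  have 1: "- (\<rat>::real set) \<noteq> {}" using irr_between[of 0 1] by auto
  have 2: "homogeneous (- \<rat>)" by (rule irr_homogeneous)
  have 3: "countable (\<rat> :: real set)" by (rule countable_rat)
  have 4: "\<rat> \<inter> - \<rat> = ({} :: real set)" by auto
  have "- \<rat> \<union> \<rat> = (UNIV :: real set)" by auto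
  then have 5: "\<not> order_iso (- \<rat> \<union> \<rat>) (- \<rat>)" using not_iso_UNIV by simp
  show ?thesis using 1 2 3 4 5 by blast
qed

end
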